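(* Let $U\subseteq\mathbb{R}$ satisfy $|\mathbb{R}\setminus U| = \mathfrak{c}$. Then there is a two-point selection $f$ on $\mathbb{R}$ such that the interior of $U$ in the topology $\tau_f$ is empty. In particular, if $U\neq\emptyset$, then $U\notin\tau_f$.
   Context: $\mathfrak{c}=|\mathbb{R}|$. A two-point selection on $\mathbb{R}$ is a function $f$ from the set of two-element subsets of $\mathbb{R}$ to $\mathbb{R}$ with $f(F)\in F$. Write $r<_f s$ if $f(\{r,s\})=r$ ($r\ne s$), $(\leftarrow,r)_f=\{x: x<_f r\}$, $(r,\rightarrow)_f=\{x: r<_f x\}$. The topology $\tau_f$ on $\mathbb{R}$ is the topology generated (as a subbase) by all sets $(\leftarrow,r)_f$, $(r,\rightarrow)_f$, $r\in\mathbb{R}$. *)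

theory Defs
  imports "HOL-Analysis.Analysis" "HOL-Library.Equipollence"
begin

definition two_point_selection :: "(real set \<Rightarrow> real) \<Rightarrow> bool" where
  "two_point_selection f \<longleftrightarrow> (\<forall>x y. x \<noteq> y \<longrightarrow> f {x, y} \<in> {x, y})"

definition sel_less :: "(real set \<Rightarrow> real) \<Rightarrow> real \<Rightarrow> real \<Rightarrow> bool" where
  "sel_less f r s \<longleftrightarrow> r \<noteq> s \<and> f {r, s} = r"

definition sel_left_ray :: "(real set \<Rightarrow> real) \<Rightarrow> real \<Rightarrow> real set" where
  "sel_left_ray f r = {x. sel_less f x r}"

definition sel_right_ray :: "(real set \<Rightarrow> real) \<Rightarrow> real \<Rightarrow> real set" where
  "sel_right_ray f r = {x. sel_less f r x}"

definition sel_topology :: "(real set \<Rightarrow> real) \<Rightarrow> real topology" where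
  "sel_topology f = topology_generated_by
     ((\<Union>r. {sel_left_ray f r, sel_right_ray f r}))"

end

theory Submission
  imports Defs
begin

lemma seq_lepoll_reals: "(UNIV::(nat \<Rightarrow> real) set) \<lesssim> (UNIV::real set)"
proof -
  obtain h :: "real \<Rightarrow> nat set" where h: "bij_betw h UNIV UNIV"
    using eqpoll_sym[OF nat_sets_eqpoll_reals] unfolding eqpoll_def by blast
  define enc where "enc F = prod_encode ` {(i,j). j \<in> h (F i)}" for F :: "nat \<Rightarrow> real"
  have "inj enc"
  proof (rule injI)
    fix F G assume "enc F = enc G"
    then have "{(i,j). j \<in> h (F i)} = {(i,j). j \<in> h (G i)}"
      unfolding enc_def by (simp add: inj_image_eq_iff inj_prod_encode)
    then have "h (F i) = h (G i)" for i by (auto simp: set_eq_iff)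
    then have "F i = G i" for i using h by (meson bij_betw_imp_inj_on injD)
    then show "F = G" by auto
  qed
  then have "(UNIV::(nat \<Rightarrow> real) set) \<lesssim> (UNIV::nat set set)"
    unfolding lepoll_def by auto
  then show ?thesis using nat_sets_eqpoll_reals lepoll_trans2 by blast
qed

definition LAs :: "(nat \<Rightarrow> real) \<Rightarrow> real set" where
  "LAs s = (\<lambda>i. s (i+2)) ` {..<nat \<lfloor>s 0\<rfloor>}"
definition LBs :: "(nat \<Rightarrow> real) \<Rightarrow> real set" where
  "LBs s = (\<lambda>i. s (i+2+nat \<lfloor>s 0\<rfloor>)) ` {..<nat \<lfloor>s 1\<rfloor>}"

lemma LAs_fin: "finite (LAs s)" unfolding LAs_def by simp
lemma LBs_fin: "finite (LBs s)" unfolding LBs_def by simp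

definition mkseq :: "real list \<Rightarrow> real list \<Rightarrow> real \<Rightarrow> nat \<Rightarrow> real" where
  "mkseq as bs t i = (if i = 0 then real (length as) else if i = 1 then real (length bs)
     else if i - 2 < length as then as ! (i-2)
     else if i - 2 - length as < length bs then bs ! (i - 2 - length as) else t)"

lemma mkseq_A: "LAs (mkseq as bs t) = set as"
  unfolding LAs_def mkseq_def by (auto simp: set_conv_nth)

lemma mkseq_B: "LBs (mkseq as bs t) = set bs"
  unfolding LBs_def mkseq_def by (auto simp: set_conv_nth)

lemma mkseq_inj: "inj (mkseq as bs)"
proof (rule injI)
  fix t t' assume "mkseq as bs t = mkseq as bs t'"
  then have "mkseq as bs t (2 + length as + length bs) = mkseq as bs t' (2 + length as + length bs)"
    by simp
  then show "t = t'" unfolding mkseq_def by simp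
qed

definition Box :: "(real set \<Rightarrow> real) \<Rightarrow> real set \<Rightarrow> real set \<Rightarrow> real set" where
  "Box f A B = {z. (\<forall>a\<in>A. sel_less f z a) \<and> (\<forall>b\<in>B. sel_less f b z)}"

lemma Box_Un: "Box f (A \<union> A') (B \<union> B') = Box f A B \<inter> Box f A' B'"
  unfolding Box_def by blast

lemma gen_box:
  assumes "generate_topology_on (\<Union>r. {sel_left_ray f r, sel_right_ray f r}) W" "x \<in> W"
  shows "\<exists>A B. finite A \<and> finite B \<and> x \<in> Box f A B \<and> Box f A B \<subseteq> W"
  using assms
proof (induction arbitrary: x rule: generate_topology_on.induct)
  case Empty
  then show ?case by simp
next
  case (Int a b)
  have xa: "x \<in> a" and xb: "x \<in> b" using Int.prems by auto
  obtain A B where "finite A" "finite B" "x \<in> Box f A B" "Box f A B \<subseteq> a"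
    using Int.IH(1)[OF xa] by blast
  moreover obtain A' B' where "finite A'" "finite B'" "x \<in> Box f A' B'" "Box f A' B' \<subseteq> b"
    using Int.IH(2)[OF xb] by blast
  ultimately have "finite (A \<union> A') \<and> finite (B \<union> B') \<and> x \<in> Box f (A \<union> A') (B \<union> B') \<and> Box f (A \<union> A') (B \<union> B') \<subseteq> a \<inter> b"
    unfolding Box_Un by blast
  then show ?case by blast
next
  case (UN K)
  obtain k where k: "k \<in> K" "x \<in> k" using UN.prems by blast
  obtain A B where "finite A" "finite B" "x \<in> Box f A B" "Box f A B \<subseteq> k"
    using UN.IH[OF k] by blast
  then show ?case using k by blast
next
  case (Basis s)
  obtain r where "s = sel_left_ray f r \<or> s = sel_right_ray f r" using Basis.hyps by blast
  then show ?case
  proof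
    assume "s = sel_left_ray f r"
    then have "x \<in> Box f {r} {} \<and> Box f {r} {} \<subseteq> s" using Basis.prems
      by (simp add: Box_def sel_left_ray_def)
    then show ?thesis by blast
  next
    assume "s = sel_right_ray f r"
    then have "x \<in> Box f {} {r} \<and> Box f {} {r} \<subseteq> s" using Basis.prems
      by (simp add: Box_def sel_right_ray_def)
    then show ?thesis by blast
  qed
qed


lemma sel_less_asym: "sel_less f x c \<Longrightarrow> sel_less f c x \<Longrightarrow> False"
  unfolding sel_less_def by (metis insert_commute)

theorem theorem3p12:
  fixes U :: "real set"
  assumes "(UNIV - U) \<approx> (UNIV :: real set)"
  shows "\<exists>f. two_point_selection f \<and> (sel_topology f) interior_of U = {}
              \<and> (U \<noteq> {} \<longrightarrow> \<not> openin (sel_topology f) U)"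
proof -
  define V where "V = UNIV - U"
  have "(UNIV::(nat \<Rightarrow> real) set) \<lesssim> V"
    using lepoll_trans2[OF seq_lepoll_reals eqpoll_sym[OF assms]] unfolding V_def .
  then obtain e :: "(nat \<Rightarrow> real) \<Rightarrow> real" where e_inj: "inj e" and eV: "\<And>s. e s \<in> V"
    unfolding lepoll_def by auto
  define LA where "LA x = LAs (inv e x)" for x
  define LB where "LB x = LBs (inv e x)" for x
  define g where "g x y = (if y \<in> LA x then x else if y \<in> LB x then y
      else if x \<in> LA y then y else if x \<in> LB y then x else x)" for x y
  define f where "f S = g (Min S) (Max S)" for S :: "real set"
  have fxy: "f {x, y} = g (min x y) (max x y)" for x y
    unfolding f_def by simp
  have gin: "g a b \<in> {a, b}" for a b unfolding g_def by simp
  have tps: "two_point_selection f"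
    unfolding two_point_selection_def
  proof (intro allI impI)
    fix x y :: real assume "x \<noteq> y"
    have "g (min x y) (max x y) \<in> {min x y, max x y}" by (rule gin)
    moreover have "{min x y, max x y} = {x, y}" by (cases "x \<le> y") (auto simp: min_def max_def)
    ultimately show "f {x, y} \<in> {x, y}" using fxy by simp
  qed
  have key: "v \<in> Box f A B"
    if hA: "LA v = A" and hB: "LB v = B" and nv: "v \<notin> A \<union> B" and dj: "A \<inter> B = {}"
       and nc: "\<And>w. w \<in> A \<union> B \<Longrightarrow> v \<notin> LA w \<union> LB w" for v A B
  proof -
    have "sel_less f v a" if "a \<in> A" for a
    proof -
      have ne: "a \<noteq> v" using that nv by auto
      have c1: "v \<notin> LA a" "v \<notin> LB a" using nc[of a] that by auto
      have c2: "a \<in> LA v" using that hA by simp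
      have "g (min v a) (max v a) = v"
      proof (cases "v < a")
        case True
        then show ?thesis using c2 by (simp add: g_def min_def max_def)
      next
        case False
        then have "min v a = a" "max v a = v" using ne by (auto simp: min_def max_def)
        then show ?thesis using c1 c2 by (simp add: g_def)
      qed
      then show ?thesis unfolding sel_less_def fxy using ne by simp
    qed
    moreover have "sel_less f b v" if "b \<in> B" for b
    proof -
      have ne: "b \<noteq> v" using that nv by auto
      have c1: "v \<notin> LA b" "v \<notin> LB b" using nc[of b] that by auto
      have c2: "b \<in> LB v" "b \<notin> LA v" using that hA hB dj by auto
      have "g (min b v) (max b v) = b"
      proof (cases "v < b")
        case True
        then have "min b v = v" "max b v = b" by (auto simp: min_def max_def)
        then show ?thesis using c2 by (simp add: g_def)
      next
        case False
        then have "min b v = b" "max b v = v" using ne by (auto simp: min_def max_def)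
        then show ?thesis using c1 c2 by (simp add: g_def)
      qed
      then show ?thesis unfolding sel_less_def fxy using ne by simp
    qed
    ultimately show ?thesis unfolding Box_def by blast
  qed
  have int: "(sel_topology f) interior_of U = {}"
  proof (rule ccontr)
    assume "(sel_topology f) interior_of U \<noteq> {}"
    then obtain x W where W: "openin (sel_topology f) W" "x \<in> W" "W \<subseteq> U"
      unfolding interior_of_def by auto
    have "generate_topology_on (\<Union>r. {sel_left_ray f r, sel_right_ray f r}) W"
      using W(1) unfolding sel_topology_def openin_topology_generated_by_iff .
    then obtain A B where AB: "finite A" "finite B" "x \<in> Box f A B" "Box f A B \<subseteq> W"
      using gen_box W(2) by blast
    have disj: "A \<inter> B = {}"
    proof (rule ccontr)
      assume "A \<inter> B \<noteq> {}"
      then obtain c where "c \<in> A" "c \<in> B" by blast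
      then have "sel_less f x c" "sel_less f c x" using AB(3) unfolding Box_def by auto
      then show False using sel_less_asym by blast
    qed
    obtain as bs where as: "set as = A" and bs: "set bs = B"
      using AB(1,2) finite_list by metis
    define F where "F = (A \<union> B) \<union> (\<Union>w\<in>A \<union> B. LA w \<union> LB w)"
    have "finite F" unfolding F_def LA_def LB_def using AB(1,2) by (simp add: LAs_fin LBs_fin)
    have ij: "inj (\<lambda>t. e (mkseq as bs t))"
      using inj_compose[OF e_inj mkseq_inj] by (simp add: comp_def)
    have "infinite (range (\<lambda>t. e (mkseq as bs t)))"
    proof
      assume "finite (range (\<lambda>t. e (mkseq as bs t)))"
      then have "finite (UNIV::real set)" using finite_imageD[OF _ ij] by blast
      then show False using infinite_UNIV_char_0 by blast
    qed
    then have "\<not> range (\<lambda>t. e (mkseq as bs t)) \<subseteq> F"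
      using \<open>finite F\<close> finite_subset by blast
    then obtain t where t: "e (mkseq as bs t) \<notin> F" by blast
    define v where "v = e (mkseq as bs t)"
    have iv: "inv e v = mkseq as bs t" unfolding v_def using e_inj by simp
    have "v \<in> Box f A B"
    proof (rule key)
      show "LA v = A" unfolding LA_def iv mkseq_A as ..
      show "LB v = B" unfolding LB_def iv mkseq_B bs ..
      show "v \<notin> A \<union> B" using t unfolding v_def[symmetric] F_def by blast
      show "A \<inter> B = {}" by (rule disj)
      show "v \<notin> LA w \<union> LB w" if "w \<in> A \<union> B" for w
        using t that unfolding v_def[symmetric] F_def by blast
    qed
    then have "v \<in> U" using AB(4) W(3) by auto
    moreover have "v \<in> V" unfolding v_def using eV by auto
    ultimately show False unfolding V_def by auto
  qed
  have "\<not> openin (sel_topology f) U" if "U \<noteq> {}"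
    using int interior_of_openin that by metis
  then show ?thesis
    using tps int by blast
qed

end
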